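(* Fix a monomial order on $S$. Let $J,E,E'$ be ideals of $S$ such that $(J,E)$ and $(J,E')$ are G-nice pairs. The following are equivalent: (a) $J\cap E+J\cap E'=J\cap(E+E')$ and $(J,E+E')$ is a G-nice pair; (b) $\mathrm{in}(J\cap E+J\cap E')=\mathrm{in}(J)\cap\mathrm{in}(E+E')$.
   Context: $K$ is a field and $S=K[x_1,\ldots,x_n]$ with a fixed monomial order. For $0\neq f\in S$, $\mathrm{in}(f)$ denotes its leading monomial; for an ideal $I$, $\mathrm{in}(I)$ is the ideal generated by the leading monomials of the nonzero elements of $I$. A pair $(J,E)$ of ideals of $S$ is called Gröbner nice (G-nice) if $\mathrm{in}(J+E)=\mathrm{in}(J)+\mathrm{in}(E)$ (equivalently, the union of a Gröbner basis of $J$ and a Gröbner basis of $E$ is a Gröbner basis of $J+E$; equivalently, $\mathrm{in}(J\cap E)=\mathrm{in}(J)\cap\mathrm{in}(E)$). *)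

theory Defs
  imports "HOL-Library.Poly_Mapping"
begin

text \<open>Multivariate polynomials over a field K in the variables of a finite type 'v
  (i.e. S = K[x_1,...,x_n] with n = CARD('v)): monomials are exponent vectors,
  monomials are finitely supported maps from monomials to coefficients.\<close>

type_synonym ('v, 'a) mpoly = "('v \<Rightarrow>\<^sub>0 nat) \<Rightarrow>\<^sub>0 'a"

definition monomial_order :: "(('v \<Rightarrow>\<^sub>0 nat) \<Rightarrow> ('v \<Rightarrow>\<^sub>0 nat) \<Rightarrow> bool) \<Rightarrow> bool" where
  "monomial_order le \<longleftrightarrow>
     (\<forall>s. le s s) \<and>
     (\<forall>s t. le s t \<and> le t s \<longrightarrow> s = t) \<and>
     (\<forall>s t u. le s t \<and> le t u \<longrightarrow> le s u) \<and>
     (\<forall>s t. le s t \<or> le t s) \<and>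
     (\<forall>s t u. le s t \<longrightarrow> le (s + u) (t + u)) \<and>
     (\<forall>t. le 0 t)"

definition is_ideal :: "'r::comm_ring_1 set \<Rightarrow> bool" where
  "is_ideal I \<longleftrightarrow> 0 \<in> I \<and> (\<forall>a\<in>I. \<forall>b\<in>I. a + b \<in> I) \<and> (\<forall>r. \<forall>a\<in>I. r * a \<in> I)"

definition ideal_gen :: "'r::comm_ring_1 set \<Rightarrow> 'r set" where
  "ideal_gen G = \<Inter>{I. is_ideal I \<and> G \<subseteq> I}"

definition ideal_sum :: "'r::comm_ring_1 set \<Rightarrow> 'r set \<Rightarrow> 'r set" where
  "ideal_sum I J = {a + b | a b. a \<in> I \<and> b \<in> J}"

definition lead_mon :: "(('v \<Rightarrow>\<^sub>0 nat) \<Rightarrow> ('v \<Rightarrow>\<^sub>0 nat) \<Rightarrow> bool) \<Rightarrow> ('v, 'a::zero) mpoly \<Rightarrow> 'v \<Rightarrow>\<^sub>0 nat" where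
  "lead_mon le f = (THE t. t \<in> Poly_Mapping.keys f \<and> (\<forall>s\<in>Poly_Mapping.keys f. le s t))"

definition init_ideal :: "(('v \<Rightarrow>\<^sub>0 nat) \<Rightarrow> ('v \<Rightarrow>\<^sub>0 nat) \<Rightarrow> bool) \<Rightarrow> ('v, 'a::field) mpoly set \<Rightarrow> ('v, 'a) mpoly set" where
  "init_ideal le I = ideal_gen {Poly_Mapping.single (lead_mon le f) 1 | f. f \<in> I \<and> f \<noteq> 0}"

definition g_nice :: "(('v \<Rightarrow>\<^sub>0 nat) \<Rightarrow> ('v \<Rightarrow>\<^sub>0 nat) \<Rightarrow> bool) \<Rightarrow> ('v, 'a::field) mpoly set \<Rightarrow> ('v, 'a) mpoly set \<Rightarrow> bool" where
  "g_nice le J E \<longleftrightarrow> init_ideal le (ideal_sum J E) = ideal_sum (init_ideal le J) (init_ideal le E)"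

end

theory Submission
  imports Defs Complex_Main
begin



lemma nat_mono_subseq:
  fixes a :: "nat \<Rightarrow> nat"
  shows "\<exists>\<phi>::nat\<Rightarrow>nat. strict_mono \<phi> \<and> mono (\<lambda>n. a (\<phi> n))"
proof -
  obtain f where f: "strict_mono f" "monoseq (\<lambda>n. a (f n))" using seq_monosub by blast
  show ?thesis
  proof (cases "\<forall>m n. m \<le> n \<longrightarrow> a (f m) \<le> a (f n)")
    case True
    then show ?thesis using f(1) by (intro exI[of _ f]) (auto simp: mono_def)
  next
    case False
    then have dec: "\<forall>m n. m \<le> n \<longrightarrow> a (f n) \<le> a (f m)" using f(2) unfolding monoseq_def by blast
    define m where "m = (LEAST v. v \<in> range (\<lambda>n. a (f n)))"
    have "m \<in> range (\<lambda>n. a (f n))" unfolding m_def by (rule LeastI_ex) blast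
    then obtain N where N: "a (f N) = m" by auto
    have const: "a (f n) = m" if "n \<ge> N" for n
    proof -
      have "a (f n) \<le> m" using dec that N by auto
      moreover have "m \<le> a (f n)" unfolding m_def by (rule Least_le) auto
      ultimately show ?thesis by simp
    qed
    have "strict_mono (\<lambda>n. f (n + N))" using f(1) by (auto simp: strict_mono_def)
    moreover have "mono (\<lambda>n. a (f (n + N)))" using const by (auto simp: mono_def)
    ultimately show ?thesis by blast
  qed
qed

lemma dickson_fin:
  fixes g :: "nat \<Rightarrow> ('v \<Rightarrow>\<^sub>0 nat)"
  assumes "finite V"
  shows "\<exists>\<phi>::nat\<Rightarrow>nat. strict_mono \<phi> \<and> (\<forall>v\<in>V. mono (\<lambda>n. Poly_Mapping.lookup (g (\<phi> n)) v))"
  using assms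
proof (induction V rule: finite_induct)
  case empty
  have "strict_mono (\<lambda>n::nat. n)" by (simp add: strict_mono_def)
  then show ?case by blast
next
  case (insert x V)
  then obtain \<phi> :: "nat \<Rightarrow> nat" where \<phi>: "strict_mono \<phi>" "\<forall>v\<in>V. mono (\<lambda>n. Poly_Mapping.lookup (g (\<phi> n)) v)" by blast
  obtain \<psi> :: "nat \<Rightarrow> nat" where \<psi>: "strict_mono \<psi>" "mono (\<lambda>n. Poly_Mapping.lookup (g (\<phi> (\<psi> n))) x)"
    using nat_mono_subseq[of "\<lambda>n. Poly_Mapping.lookup (g (\<phi> n)) x"] by blast
  have "strict_mono (\<lambda>n. \<phi> (\<psi> n))" using \<phi>(1) \<psi>(1) by (auto simp: strict_mono_def)
  moreover have "\<forall>v\<in>insert x V. mono (\<lambda>n. Poly_Mapping.lookup (g (\<phi> (\<psi> n))) v)"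
  proof
    fix v assume "v \<in> insert x V"
    then show "mono (\<lambda>n. Poly_Mapping.lookup (g (\<phi> (\<psi> n))) v)"
    proof
      assume "v = x" then show ?thesis using \<psi>(2) by simp
    next
      assume "v \<in> V"
      then have m: "mono (\<lambda>n. Poly_Mapping.lookup (g (\<phi> n)) v)" using \<phi>(2) by blast
      have "mono \<psi>" using \<psi>(1) strict_mono_mono by blast
      then show ?thesis using m by (auto simp: mono_def)
    qed
  qed
  ultimately show ?case by blast
qed

lemma dickson:
  fixes g :: "nat \<Rightarrow> ('v::finite \<Rightarrow>\<^sub>0 nat)"
  shows "\<exists>i j. i < j \<and> (\<forall>v. Poly_Mapping.lookup (g i) v \<le> Poly_Mapping.lookup (g j) v)"
proof -
  obtain \<phi> :: "nat \<Rightarrow> nat" where \<phi>: "strict_mono \<phi>" "\<forall>v. mono (\<lambda>n. Poly_Mapping.lookup (g (\<phi> n)) v)"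
    using dickson_fin[of UNIV g] by auto
  have "\<phi> 0 < \<phi> (1::nat)" using \<phi>(1) by (auto simp: strict_mono_def)
  moreover have "\<forall>v. Poly_Mapping.lookup (g (\<phi> 0)) v \<le> Poly_Mapping.lookup (g (\<phi> 1)) v"
    using \<phi>(2) by (auto simp: mono_def)
  ultimately show ?thesis by blast
qed




locale morder =
  fixes le :: "('v::finite \<Rightarrow>\<^sub>0 nat) \<Rightarrow> ('v \<Rightarrow>\<^sub>0 nat) \<Rightarrow> bool"
  assumes mo: "monomial_order le"

begin

lemma le_refl: "le s s" using mo unfolding monomial_order_def by blast
lemma le_antisym: "le s t \<Longrightarrow> le t s \<Longrightarrow> s = t" using mo unfolding monomial_order_def by blast
lemma le_trans: "le s t \<Longrightarrow> le t u \<Longrightarrow> le s u" using mo unfolding monomial_order_def by blast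
lemma le_total: "le s t \<or> le t s" using mo unfolding monomial_order_def by blast
lemma le_add: "le s t \<Longrightarrow> le (u + s) (u + t)"
proof -
  assume "le s t"
  then have "le (s + u) (t + u)" using mo unfolding monomial_order_def by blast
  then show ?thesis by (simp add: add.commute)
qed
lemma le_zero: "le 0 t" using mo unfolding monomial_order_def by blast

definition R where "R = {(s,t). le s t \<and> s \<noteq> t}"

lemma wf_R: "wf R"
proof (rule ccontr)
  assume "\<not> wf R"
  then obtain f where f: "\<And>i. (f (Suc i), f i) \<in> R" unfolding wf_iff_no_infinite_down_chain by blast
  have le1: "le (f j) (f i)" if "i \<le> j" for i j
    using that
  proof (induction j rule: dec_induct)
    case base then show ?case by (rule le_refl)
  next
    case (step j)
    then show ?case using f[of j] le_trans unfolding R_def by blast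
  qed
  have strict: "f j \<noteq> f i" if "i < j" for i j
  proof
    assume eq: "f j = f i"
    have "le (f j) (f (Suc i))" using le1 that by simp
    then have "le (f i) (f (Suc i))" using eq by simp
    moreover have "le (f (Suc i)) (f i)" "f (Suc i) \<noteq> f i" using f[of i] unfolding R_def by auto
    ultimately show False using le_antisym by blast
  qed
  obtain i j where ij: "i < j" "\<forall>v. Poly_Mapping.lookup (f i) v \<le> Poly_Mapping.lookup (f j) v"
    using dickson[of f] by blast
  define d where "d = f j - f i"
  have "f i + d = f j"
    by (rule poly_mapping_eqI) (use ij(2) in \<open>simp add: d_def lookup_add lookup_minus\<close>)
  moreover have "le (f i + 0) (f i + d)" using le_add[OF le_zero] .
  ultimately have "le (f i) (f j)" by simp
  then have "f i = f j" using le1[of i j] ij(1) le_antisym by auto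
  then show False using strict[OF ij(1)] by simp
qed

end



lemma keys_empty_iff: "Poly_Mapping.keys f = {} \<longleftrightarrow> f = 0"
  by (auto simp: poly_mapping_eq_iff in_keys_iff fun_eq_iff)

lemma lookup_single_mult:
  fixes f :: "('k::cancel_comm_monoid_add \<Rightarrow>\<^sub>0 'a::comm_semiring_1)"
  shows "Poly_Mapping.lookup (Poly_Mapping.single d c * f) (d + s) = c * Poly_Mapping.lookup f s"
proof -
  have "Poly_Mapping.lookup (Poly_Mapping.single d c * f) (d + s)
     = (\<Sum>l. (c when d = l) * (\<Sum>q. Poly_Mapping.lookup f q when d + s = l + q))"
    by (simp add: lookup_mult lookup_single)
  also have "\<dots> = (\<Sum>l. (c * (\<Sum>q. Poly_Mapping.lookup f q when d + s = l + q)) when d = l)"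
    by (rule Sum_any.cong) (simp add: when_def)
  also have "\<dots> = c * (\<Sum>q. Poly_Mapping.lookup f q when d + s = d + q)"
    by simp
  also have "(\<Sum>q. Poly_Mapping.lookup f q when d + s = d + q) = (\<Sum>q. Poly_Mapping.lookup f q when s = q)"
    by (rule Sum_any.cong) (simp add: when_def)
  also have "\<dots> = Poly_Mapping.lookup f s" by simp
  finally show ?thesis .
qed

lemma keys_single_mult:
  fixes f :: "('k::cancel_comm_monoid_add \<Rightarrow>\<^sub>0 'a::comm_semiring_1)"
  shows "Poly_Mapping.keys (Poly_Mapping.single d c * f) \<subseteq> (\<lambda>s. d + s) ` Poly_Mapping.keys f"
  using keys_mult[of "Poly_Mapping.single d c" f] by (auto split: if_splits)

lemma keys_single_mult_eq:
  fixes f :: "('k::cancel_comm_monoid_add \<Rightarrow>\<^sub>0 'a::field)"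
  assumes "c \<noteq> 0"
  shows "Poly_Mapping.keys (Poly_Mapping.single d c * f) = (\<lambda>s. d + s) ` Poly_Mapping.keys f"
proof
  show "Poly_Mapping.keys (Poly_Mapping.single d c * f) \<subseteq> (\<lambda>s. d + s) ` Poly_Mapping.keys f"
    by (rule keys_single_mult)
  show "(\<lambda>s. d + s) ` Poly_Mapping.keys f \<subseteq> Poly_Mapping.keys (Poly_Mapping.single d c * f)"
    using assms by (auto simp: in_keys_iff lookup_single_mult)
qed

lemma lookup_scal:
  fixes f :: "('k::cancel_comm_monoid_add \<Rightarrow>\<^sub>0 'a::comm_semiring_1)"
  shows "Poly_Mapping.lookup (Poly_Mapping.single 0 c * f) s = c * Poly_Mapping.lookup f s"
  using lookup_single_mult[of 0 c f s] by simp

lemma keys_scal: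
  fixes f :: "('k::cancel_comm_monoid_add \<Rightarrow>\<^sub>0 'a::comm_semiring_1)"
  shows "Poly_Mapping.keys (Poly_Mapping.single 0 c * f) \<subseteq> Poly_Mapping.keys f"
  by (auto simp: in_keys_iff lookup_scal)

lemma poly_sum_monomials:
  fixes p :: "'k \<Rightarrow>\<^sub>0 'a::comm_monoid_add"
  shows "p = (\<Sum>s\<in>Poly_Mapping.keys p. Poly_Mapping.single s (Poly_Mapping.lookup p s))"
proof (rule poly_mapping_eqI)
  fix k
  show "Poly_Mapping.lookup p k = Poly_Mapping.lookup (\<Sum>s\<in>Poly_Mapping.keys p. Poly_Mapping.single s (Poly_Mapping.lookup p s)) k"
    by (simp add: lookup_sum lookup_single when_def in_keys_iff)
qed

lemma keys_sum_sub:
  fixes b :: "'i \<Rightarrow> ('k \<Rightarrow>\<^sub>0 'a::comm_monoid_add)"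
  shows "Poly_Mapping.keys (sum b I) \<subseteq> (\<Union>i\<in>I. Poly_Mapping.keys (b i))"
proof (induction I rule: infinite_finite_induct)
  case (insert i I)
  then show ?case using keys_add[of "b i" "sum b I"] by auto
qed auto

lemma ideal_0: "is_ideal I \<Longrightarrow> 0 \<in> I" unfolding is_ideal_def by blast
lemma ideal_add: "is_ideal I \<Longrightarrow> a \<in> I \<Longrightarrow> b \<in> I \<Longrightarrow> a + b \<in> I" unfolding is_ideal_def by blast
lemma ideal_mult: "is_ideal I \<Longrightarrow> a \<in> I \<Longrightarrow> r * a \<in> I" unfolding is_ideal_def by blast
lemma ideal_uminus: "is_ideal I \<Longrightarrow> a \<in> I \<Longrightarrow> - a \<in> I"
  using ideal_mult[of I a "-1"] by simp
lemma ideal_diff: "is_ideal I \<Longrightarrow> a \<in> I \<Longrightarrow> b \<in> I \<Longrightarrow> a - b \<in> I"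
  using ideal_add[of I a "-b"] ideal_uminus[of I b] by simp
lemma ideal_sum_closed: "is_ideal I \<Longrightarrow> (\<And>i. i \<in> S \<Longrightarrow> f i \<in> I) \<Longrightarrow> sum f S \<in> I"
proof (induction S rule: infinite_finite_induct)
  case (infinite A) then show ?case by (simp add: ideal_0)
next
  case empty then show ?case by (simp add: ideal_0)
next
  case (insert x F) then show ?case by (simp add: ideal_add)
qed

lemma ideal_inter: "is_ideal A \<Longrightarrow> is_ideal B \<Longrightarrow> is_ideal (A \<inter> B)"
  unfolding is_ideal_def by blast

lemma ideal_ideal_sum: "is_ideal A \<Longrightarrow> is_ideal B \<Longrightarrow> is_ideal (ideal_sum A B)"
  unfolding is_ideal_def ideal_sum_def
proof (intro conjI)
  assume A: "0 \<in> A \<and> (\<forall>a\<in>A. \<forall>b\<in>A. a + b \<in> A) \<and> (\<forall>r. \<forall>a\<in>A. r * a \<in> A)"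
     and B: "0 \<in> B \<and> (\<forall>a\<in>B. \<forall>b\<in>B. a + b \<in> B) \<and> (\<forall>r. \<forall>a\<in>B. r * a \<in> B)"
  show "0 \<in> {a + b |a b. a \<in> A \<and> b \<in> B}" using A B by force
  show "\<forall>a\<in>{a + b |a b. a \<in> A \<and> b \<in> B}. \<forall>b\<in>{a + b |a b. a \<in> A \<and> b \<in> B}. a + b \<in> {a + b |a b. a \<in> A \<and> b \<in> B}"
  proof (intro ballI)
    fix x y assume "x \<in> {a + b |a b. a \<in> A \<and> b \<in> B}" "y \<in> {a + b |a b. a \<in> A \<and> b \<in> B}"
    then obtain a b a' b' where "x = a + b" "y = a' + b'" "a \<in> A" "b \<in> B" "a' \<in> A" "b' \<in> B" by blast
    moreover have "x + y = (a + a') + (b + b')" using calculation by (simp add: algebra_simps)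
    ultimately show "x + y \<in> {a + b |a b. a \<in> A \<and> b \<in> B}" using A B by blast
  qed
  show "\<forall>r. \<forall>a\<in>{a + b |a b. a \<in> A \<and> b \<in> B}. r * a \<in> {a + b |a b. a \<in> A \<and> b \<in> B}"
  proof (intro allI ballI)
    fix r x assume "x \<in> {a + b |a b. a \<in> A \<and> b \<in> B}"
    then obtain a b where "x = a + b" "a \<in> A" "b \<in> B" by blast
    moreover have "r * x = r * a + r * b" using calculation by (simp add: algebra_simps)
    ultimately show "r * x \<in> {a + b |a b. a \<in> A \<and> b \<in> B}" using A B by blast
  qed
qed

lemma ideal_sum_left: "is_ideal B \<Longrightarrow> a \<in> A \<Longrightarrow> a \<in> ideal_sum A B"
  unfolding ideal_sum_def using ideal_0[of B] by force
lemma ideal_sum_right: "is_ideal A \<Longrightarrow> b \<in> B \<Longrightarrow> b \<in> ideal_sum A B"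
  unfolding ideal_sum_def using ideal_0[of A] by force
lemma ideal_sum_least: "is_ideal C \<Longrightarrow> A \<subseteq> C \<Longrightarrow> B \<subseteq> C \<Longrightarrow> ideal_sum A B \<subseteq> C"
  unfolding ideal_sum_def using ideal_add[of C] by blast




definition Setp :: "('v \<Rightarrow>\<^sub>0 nat) set \<Rightarrow> ('v, 'a::field) mpoly set" where
  "Setp A = {p. Poly_Mapping.keys p \<subseteq> A}"

lemma Setp_inter: "Setp A \<inter> Setp B = Setp (A \<inter> B)" unfolding Setp_def by auto

lemma Setp_inj: "Setp A = (Setp B :: ('v, 'a::field) mpoly set) \<Longrightarrow> A = B"
proof -
  assume eq: "Setp A = (Setp B :: ('v, 'a::field) mpoly set)"
  have "A \<subseteq> B" if "Setp A = (Setp B :: ('v, 'a::field) mpoly set)" for A B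
  proof
    fix t assume "t \<in> A"
    then have "(Poly_Mapping.single t (1::'a)) \<in> Setp A" by (simp add: Setp_def)
    then have "(Poly_Mapping.single t (1::'a)) \<in> Setp B" using that by simp
    then show "t \<in> B" by (simp add: Setp_def)
  qed
  then show ?thesis using eq by blast
qed

lemma Setp_sum: "ideal_sum (Setp A) (Setp B) = (Setp (A \<union> B) :: ('v, 'a::field) mpoly set)"
proof
  show "ideal_sum (Setp A) (Setp B) \<subseteq> (Setp (A \<union> B) :: ('v, 'a::field) mpoly set)"
    unfolding ideal_sum_def Setp_def using keys_add by fastforce
  show "(Setp (A \<union> B) :: ('v, 'a::field) mpoly set) \<subseteq> ideal_sum (Setp A) (Setp B)"
  proof
    fix p :: "('v, 'a) mpoly" assume p: "p \<in> Setp (A \<union> B)"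
    let ?m = "\<lambda>s. Poly_Mapping.single s (Poly_Mapping.lookup p s)"
    define a where "a = (\<Sum>s\<in>Poly_Mapping.keys p \<inter> A. ?m s)"
    define b where "b = (\<Sum>s\<in>Poly_Mapping.keys p - A. ?m s)"
    have "p = (\<Sum>s\<in>Poly_Mapping.keys p. ?m s)" by (rule poly_sum_monomials)
    also have "\<dots> = a + b" unfolding a_def b_def
      by (rule sum.Int_Diff) simp
    finally have "p = a + b" .
    moreover have "a \<in> Setp A"
    proof -
      have "Poly_Mapping.keys a \<subseteq> (\<Union>s\<in>Poly_Mapping.keys p \<inter> A. Poly_Mapping.keys (?m s))"
        unfolding a_def by (rule keys_sum_sub)
      also have "\<dots> \<subseteq> A" by auto
      finally show ?thesis unfolding Setp_def by simp
    qed
    moreover have "b \<in> Setp B"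
    proof -
      have "Poly_Mapping.keys b \<subseteq> (\<Union>s\<in>Poly_Mapping.keys p - A. Poly_Mapping.keys (?m s))"
        unfolding b_def by (rule keys_sum_sub)
      also have "\<dots> \<subseteq> B" using p unfolding Setp_def by auto
      finally show ?thesis unfolding Setp_def by simp
    qed
    ultimately show "p \<in> ideal_sum (Setp A) (Setp B)" unfolding ideal_sum_def by blast
  qed
qed

lemma Setp_ideal:
  assumes up: "\<And>t d. t \<in> A \<Longrightarrow> d + t \<in> A"
  shows "is_ideal (Setp A :: ('v, 'a::field) mpoly set)"
  unfolding is_ideal_def Setp_def
proof (intro conjI ballI allI)
  show "0 \<in> {p :: ('v, 'a) mpoly. Poly_Mapping.keys p \<subseteq> A}" by simp
  fix a b :: "('v, 'a) mpoly"
  assume "a \<in> {p. Poly_Mapping.keys p \<subseteq> A}" "b \<in> {p. Poly_Mapping.keys p \<subseteq> A}"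
  then show "a + b \<in> {p. Poly_Mapping.keys p \<subseteq> A}" using keys_add[of a b] by auto
next
  fix r a :: "('v, 'a) mpoly"
  assume "a \<in> {p. Poly_Mapping.keys p \<subseteq> A}"
  then show "r * a \<in> {p. Poly_Mapping.keys p \<subseteq> A}" using keys_mult[of r a] up by blast
qed

lemma Setp_least:
  assumes K: "is_ideal K" and gen: "\<And>t. t \<in> A \<Longrightarrow> Poly_Mapping.single t 1 \<in> K"
  shows "(Setp A :: ('v, 'a::field) mpoly set) \<subseteq> K"
proof
  fix p :: "('v, 'a) mpoly" assume p: "p \<in> Setp A"
  have "p = (\<Sum>s\<in>Poly_Mapping.keys p. Poly_Mapping.single s (Poly_Mapping.lookup p s))"
    by (rule poly_sum_monomials)
  also have "\<dots> \<in> K"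
  proof (rule ideal_sum_closed[OF K])
    fix s assume s: "s \<in> Poly_Mapping.keys p"
    have "Poly_Mapping.single s (Poly_Mapping.lookup p s)
        = Poly_Mapping.single 0 (Poly_Mapping.lookup p s) * Poly_Mapping.single s 1"
      by (simp add: mult_single)
    also have "\<dots> \<in> K" using s p gen ideal_mult[OF K] unfolding Setp_def by blast
    finally show "Poly_Mapping.single s (Poly_Mapping.lookup p s) \<in> K" .
  qed
  finally show "p \<in> K" .
qed

context morder begin

abbreviation lm where "lm \<equiv> lead_mon le"

lemma ex_max: "finite S \<Longrightarrow> S \<noteq> {} \<Longrightarrow> \<exists>m\<in>S. \<forall>s\<in>S. le s m"
proof (induction S rule: finite_ne_induct)
  case (singleton x) then show ?case using le_refl by auto
next
  case (insert x F)
  then obtain m where m: "m \<in> F" "\<forall>s\<in>F. le s m" by blast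
  show ?case
  proof (cases "le x m")
    case True then show ?thesis using m by auto
  next
    case False then have "le m x" using le_total by blast
    then show ?thesis using m le_refl le_trans by blast
  qed
qed

lemma lm_prop:
  fixes f :: "('v, 'a::zero) mpoly"
  assumes "f \<noteq> 0"
  shows "lm f \<in> Poly_Mapping.keys f \<and> (\<forall>s\<in>Poly_Mapping.keys f. le s (lm f))"
proof -
  have "Poly_Mapping.keys f \<noteq> {}" using assms keys_empty_iff by blast
  then obtain m where m: "m \<in> Poly_Mapping.keys f" "\<forall>s\<in>Poly_Mapping.keys f. le s m"
    using ex_max[of "Poly_Mapping.keys f"] by auto
  have "\<exists>!t. t \<in> Poly_Mapping.keys f \<and> (\<forall>s\<in>Poly_Mapping.keys f. le s t)"
    using m le_antisym by blast
  then show ?thesis unfolding lead_mon_def by (rule theI')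
qed

lemma lm_eqI:
  fixes f :: "('v, 'a::zero) mpoly"
  assumes "t \<in> Poly_Mapping.keys f" "\<forall>s\<in>Poly_Mapping.keys f. le s t"
  shows "lm f = t"
proof -
  have "f \<noteq> 0" using assms(1) by auto
  then show ?thesis using lm_prop[of f] assms le_antisym by blast
qed

definition LM :: "('v, 'a::zero) mpoly set \<Rightarrow> ('v \<Rightarrow>\<^sub>0 nat) set" where
  "LM I = {lm f | f. f \<in> I \<and> f \<noteq> 0}"

lemma LM_up:
  fixes I :: "('v, 'a::field) mpoly set"
  assumes I: "is_ideal I" and t: "t \<in> LM I"
  shows "d + t \<in> LM I"
proof -
  obtain f where f: "f \<in> I" "f \<noteq> 0" "lm f = t" using t unfolding LM_def by blast
  define g where "g = Poly_Mapping.single d (1::'a) * f"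
  have kg: "Poly_Mapping.keys g = (\<lambda>s. d + s) ` Poly_Mapping.keys f"
    unfolding g_def by (rule keys_single_mult_eq) simp
  have "lm g = d + t"
  proof (rule lm_eqI)
    show "d + t \<in> Poly_Mapping.keys g" using kg lm_prop[OF f(2)] f(3) by auto
    show "\<forall>s\<in>Poly_Mapping.keys g. le s (d + t)" using kg lm_prop[OF f(2)] f(3) le_add by auto
  qed
  moreover have "g \<in> I" unfolding g_def using ideal_mult[OF I f(1)] .
  moreover have "g \<noteq> 0" using kg lm_prop[OF f(2)] by auto
  ultimately show ?thesis unfolding LM_def by (intro CollectI exI[of _ g]) auto
qed

lemma init_Setp:
  fixes I :: "('v, 'a::field) mpoly set"
  assumes I: "is_ideal I"
  shows "init_ideal le I = Setp (LM I)"
proof -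
  let ?G = "{Poly_Mapping.single (lm f) (1::'a) | f. f \<in> I \<and> f \<noteq> 0}"
  have id: "is_ideal (Setp (LM I) :: ('v, 'a) mpoly set)"
    by (rule Setp_ideal) (rule LM_up[OF I])
  have gen: "?G \<subseteq> Setp (LM I)" unfolding Setp_def LM_def by auto
  have "ideal_gen ?G \<subseteq> Setp (LM I)"
    unfolding ideal_gen_def using id gen by blast
  moreover have "Setp (LM I) \<subseteq> ideal_gen ?G"
    unfolding ideal_gen_def
  proof (rule Inter_greatest)
    fix K assume "K \<in> {K. is_ideal K \<and> ?G \<subseteq> K}"
    then have K: "is_ideal K" "?G \<subseteq> K" by auto
    show "Setp (LM I) \<subseteq> K"
    proof (rule Setp_least[OF K(1)])
      fix t assume "t \<in> LM I"
      then show "Poly_Mapping.single t 1 \<in> K" using K(2) unfolding LM_def by blast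
    qed
  qed
  ultimately show ?thesis unfolding init_ideal_def by blast
qed

end



context morder begin

lemma cancel_keys:
  fixes f g :: "('v, 'a::field) mpoly"
  assumes f: "\<forall>s\<in>Poly_Mapping.keys f. le s t" and g: "\<forall>s\<in>Poly_Mapping.keys g. le s t"
    and gt: "Poly_Mapping.lookup g t \<noteq> 0"
  shows "\<forall>s\<in>Poly_Mapping.keys (f - Poly_Mapping.single 0 (Poly_Mapping.lookup f t / Poly_Mapping.lookup g t) * g). le s t \<and> s \<noteq> t"
proof
  fix s
  let ?c = "Poly_Mapping.lookup f t / Poly_Mapping.lookup g t"
  assume s: "s \<in> Poly_Mapping.keys (f - Poly_Mapping.single 0 ?c * g)"
  then have nz: "Poly_Mapping.lookup f s - ?c * Poly_Mapping.lookup g s \<noteq> 0"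
    by (simp add: in_keys_iff lookup_minus lookup_scal)
  then have "s \<in> Poly_Mapping.keys f \<or> s \<in> Poly_Mapping.keys g" by (auto simp: in_keys_iff)
  then have "le s t" using f g by blast
  moreover have "s \<noteq> t" using nz gt by auto
  ultimately show "le s t \<and> s \<noteq> t" by blast
qed

lemma lm_below:
  fixes h :: "('v, 'a::zero) mpoly"
  assumes "h \<noteq> 0" "\<forall>s\<in>Poly_Mapping.keys h. le s t \<and> s \<noteq> t"
  shows "(lm h, t) \<in> R" "\<forall>s\<in>Poly_Mapping.keys h. le s (lm h)"
  using lm_prop[OF assms(1)] assms(2) unfolding R_def by auto

lemma lookup_lm_nz:
  fixes h :: "('v, 'a::zero) mpoly"
  assumes "h \<noteq> 0" shows "Poly_Mapping.lookup h (lm h) \<noteq> 0"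
  using lm_prop[OF assms] by (simp add: in_keys_iff)

lemma LM_mono: "A \<subseteq> B \<Longrightarrow> LM A \<subseteq> LM B" unfolding LM_def by blast

lemma LM_eq_sub:
  fixes A B :: "('v, 'a::field) mpoly set"
  assumes A: "is_ideal A" and B: "is_ideal B" and sub: "A \<subseteq> B" and LMs: "LM B \<subseteq> LM A"
  shows "B \<subseteq> A"
proof -
  have main: "\<forall>f\<in>B. (\<forall>s\<in>Poly_Mapping.keys f. le s t) \<longrightarrow> f \<in> A" for t
  proof (induction t rule: wf_induct[OF wf_R])
    case (1 t)
    show ?case
    proof (intro ballI impI)
      fix f assume f: "f \<in> B" "\<forall>s\<in>Poly_Mapping.keys f. le s t"
      have below: "h \<in> A" if "h \<in> B" "\<forall>s\<in>Poly_Mapping.keys h. le s t \<and> s \<noteq> t" for h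
      proof (cases "h = 0")
        case True then show ?thesis using ideal_0[OF A] by simp
      next
        case False
        then show ?thesis using 1 that(1) lm_below[OF False that(2)] by blast
      qed
      show "f \<in> A"
      proof (cases "t \<in> Poly_Mapping.keys f")
        case False then show ?thesis using below f by (metis)
      next
        case True
        then have lmf: "lm f = t" using lm_eqI f(2) by blast
        have "f \<noteq> 0" using True by auto
        then have "t \<in> LM B" using f(1) lmf unfolding LM_def by blast
        then have "t \<in> LM A" using LMs by blast
        then obtain g where g: "g \<in> A" "g \<noteq> 0" "lm g = t" unfolding LM_def by blast
        let ?c = "Poly_Mapping.lookup f t / Poly_Mapping.lookup g t"
        define h where "h = f - Poly_Mapping.single 0 ?c * g"
        have gB: "g \<in> B" using g(1) sub by blast
        have "h \<in> B" unfolding h_def using ideal_diff[OF B f(1) ideal_mult[OF B gB]] .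
        moreover have "\<forall>s\<in>Poly_Mapping.keys h. le s t \<and> s \<noteq> t"
          unfolding h_def
          by (rule cancel_keys) (use f(2) lm_prop[OF g(2)] g(3) lookup_lm_nz[OF g(2)] in auto)
        ultimately have "h \<in> A" using below by blast
        moreover have "f = h + Poly_Mapping.single 0 ?c * g" unfolding h_def by simp
        ultimately show ?thesis using ideal_add[OF A] ideal_mult[OF A g(1)] by metis
      qed
    qed
  qed
  show ?thesis
  proof
    fix f assume f: "f \<in> B"
    show "f \<in> A"
    proof (cases "f = 0")
      case True then show ?thesis using ideal_0[OF A] by simp
    next
      case False then show ?thesis using main[of "lm f"] f lm_prop[OF False] by blast
    qed
  qed
qed

lemma LM_inter_sub: "LM (A \<inter> B) \<subseteq> LM A \<inter> LM B" unfolding LM_def by blast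

lemma LM_sum_sup:
  fixes A B :: "('v, 'a::field) mpoly set"
  assumes "is_ideal A" "is_ideal B"
  shows "LM A \<union> LM B \<subseteq> LM (ideal_sum A B)"
  using LM_mono[OF subsetI[OF ideal_sum_left[OF assms(2)]]] LM_mono[OF subsetI[OF ideal_sum_right[OF assms(1)]]]
  by blast

end



context morder begin

lemma std_rep:
  fixes A B :: "('v, 'a::field) mpoly set"
  assumes A: "is_ideal A" and B: "is_ideal B"
    and hyp: "LM (ideal_sum A B) \<subseteq> LM A \<union> LM B"
  shows "\<forall>f\<in>ideal_sum A B. (\<forall>s\<in>Poly_Mapping.keys f. le s t) \<longrightarrow>
     (\<exists>a\<in>A. \<exists>b\<in>B. f = a + b \<and> (\<forall>s\<in>Poly_Mapping.keys a. le s t) \<and> (\<forall>s\<in>Poly_Mapping.keys b. le s t))"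
proof (induction t rule: wf_induct[OF wf_R])
  case (1 t)
  have S: "is_ideal (ideal_sum A B)" using ideal_ideal_sum[OF A B] .
  show ?case
  proof (intro ballI impI)
    fix f assume f: "f \<in> ideal_sum A B" "\<forall>s\<in>Poly_Mapping.keys f. le s t"
    have below: "\<exists>a\<in>A. \<exists>b\<in>B. h = a + b \<and> (\<forall>s\<in>Poly_Mapping.keys a. le s t) \<and> (\<forall>s\<in>Poly_Mapping.keys b. le s t)"
      if "h \<in> ideal_sum A B" "\<forall>s\<in>Poly_Mapping.keys h. le s t \<and> s \<noteq> t" for h
    proof (cases "h = 0")
      case True then show ?thesis using ideal_0[OF A] ideal_0[OF B] by force
    next
      case False
      note lb = lm_below[OF False that(2)]
      have IH: "\<forall>f\<in>ideal_sum A B. (\<forall>s\<in>Poly_Mapping.keys f. le s (lm h)) \<longrightarrow>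
     (\<exists>a\<in>A. \<exists>b\<in>B. f = a + b \<and> (\<forall>s\<in>Poly_Mapping.keys a. le s (lm h)) \<and> (\<forall>s\<in>Poly_Mapping.keys b. le s (lm h)))"
        using 1 lb(1) by blast
      have "\<exists>a\<in>A. \<exists>b\<in>B. h = a + b \<and> (\<forall>s\<in>Poly_Mapping.keys a. le s (lm h)) \<and> (\<forall>s\<in>Poly_Mapping.keys b. le s (lm h))"
        using IH that(1) lb(2) by blast
      then obtain a b where ab: "a \<in> A" "b \<in> B" "h = a + b"
        "\<forall>s\<in>Poly_Mapping.keys a. le s (lm h)" "\<forall>s\<in>Poly_Mapping.keys b. le s (lm h)"
        by blast
      have "le (lm h) t" using lb(1) unfolding R_def by simp
      then show ?thesis using ab le_trans by blast
    qed
    show "\<exists>a\<in>A. \<exists>b\<in>B. f = a + b \<and> (\<forall>s\<in>Poly_Mapping.keys a. le s t) \<and> (\<forall>s\<in>Poly_Mapping.keys b. le s t)"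
    proof (cases "t \<in> Poly_Mapping.keys f")
      case False then show ?thesis using below f by (metis)
    next
      case True
      then have lmf: "lm f = t" using lm_eqI f(2) by blast
      have "f \<noteq> 0" using True by auto
      then have "t \<in> LM (ideal_sum A B)" using f(1) lmf unfolding LM_def by blast
      then have "t \<in> LM A \<or> t \<in> LM B" using hyp by blast
      then show ?thesis
      proof
        assume "t \<in> LM A"
        then obtain g where g: "g \<in> A" "g \<noteq> 0" "lm g = t" unfolding LM_def by blast
        let ?c = "Poly_Mapping.lookup f t / Poly_Mapping.lookup g t"
        define cg where "cg = Poly_Mapping.single 0 ?c * g"
        define h where "h = f - cg"
        have cgA: "cg \<in> A" unfolding cg_def using ideal_mult[OF A g(1)] .
        have kcg: "\<forall>s\<in>Poly_Mapping.keys cg. le s t"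
          using keys_scal[of ?c g] lm_prop[OF g(2)] g(3) unfolding cg_def by blast
        have "h \<in> ideal_sum A B" unfolding h_def
          using ideal_diff[OF S f(1) ideal_sum_left[OF B cgA]] .
        moreover have "\<forall>s\<in>Poly_Mapping.keys h. le s t \<and> s \<noteq> t"
          unfolding h_def cg_def
          by (rule cancel_keys) (use f(2) lm_prop[OF g(2)] g(3) lookup_lm_nz[OF g(2)] in auto)
        ultimately obtain a b where ab: "a \<in> A" "b \<in> B" "h = a + b"
          "\<forall>s\<in>Poly_Mapping.keys a. le s t" "\<forall>s\<in>Poly_Mapping.keys b. le s t"
          using below by blast
        have "f = (a + cg) + b" using ab(3) unfolding h_def by (simp add: algebra_simps)
        moreover have "a + cg \<in> A" using ideal_add[OF A ab(1) cgA] .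
        moreover have "\<forall>s\<in>Poly_Mapping.keys (a + cg). le s t" using keys_add[of a cg] ab(4) kcg by blast
        ultimately show ?thesis using ab by blast
      next
        assume "t \<in> LM B"
        then obtain g where g: "g \<in> B" "g \<noteq> 0" "lm g = t" unfolding LM_def by blast
        let ?c = "Poly_Mapping.lookup f t / Poly_Mapping.lookup g t"
        define cg where "cg = Poly_Mapping.single 0 ?c * g"
        define h where "h = f - cg"
        have cgB: "cg \<in> B" unfolding cg_def using ideal_mult[OF B g(1)] .
        have kcg: "\<forall>s\<in>Poly_Mapping.keys cg. le s t"
          using keys_scal[of ?c g] lm_prop[OF g(2)] g(3) unfolding cg_def by blast
        have "h \<in> ideal_sum A B" unfolding h_def
          using ideal_diff[OF S f(1) ideal_sum_right[OF A cgB]] .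
        moreover have "\<forall>s\<in>Poly_Mapping.keys h. le s t \<and> s \<noteq> t"
          unfolding h_def cg_def
          by (rule cancel_keys) (use f(2) lm_prop[OF g(2)] g(3) lookup_lm_nz[OF g(2)] in auto)
        ultimately obtain a b where ab: "a \<in> A" "b \<in> B" "h = a + b"
          "\<forall>s\<in>Poly_Mapping.keys a. le s t" "\<forall>s\<in>Poly_Mapping.keys b. le s t"
          using below by blast
        have "f = a + (b + cg)" using ab(3) unfolding h_def by (simp add: algebra_simps)
        moreover have "b + cg \<in> B" using ideal_add[OF B ab(2) cgB] .
        moreover have "\<forall>s\<in>Poly_Mapping.keys (b + cg). le s t" using keys_add[of b cg] ab(5) kcg by blast
        ultimately show ?thesis using ab by blast
      qed
    qed
  qed
qed

lemma gnice_imp_inter: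
  fixes A B :: "('v, 'a::field) mpoly set"
  assumes A: "is_ideal A" and B: "is_ideal B"
    and hyp: "LM (ideal_sum A B) \<subseteq> LM A \<union> LM B"
  shows "LM A \<inter> LM B \<subseteq> LM (A \<inter> B)"
proof
  fix m assume "m \<in> LM A \<inter> LM B"
  then have mA: "m \<in> LM A" and mB: "m \<in> LM B" by auto
  obtain g where g: "g \<in> A" "g \<noteq> 0" "lm g = m" using mA unfolding LM_def by blast
  obtain h where h: "h \<in> B" "h \<noteq> 0" "lm h = m" using mB unfolding LM_def by blast
  define h' where "h' = Poly_Mapping.single 0 (Poly_Mapping.lookup g m / Poly_Mapping.lookup h m) * h"
  have h'B: "h' \<in> B" unfolding h'_def using ideal_mult[OF B h(1)] .
  have gm: "Poly_Mapping.lookup g m \<noteq> 0" using lookup_lm_nz[OF g(2)] g(3) by simp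
  have hm: "Poly_Mapping.lookup h m \<noteq> 0" using lookup_lm_nz[OF h(2)] h(3) by simp
  have kg: "\<forall>s\<in>Poly_Mapping.keys g. le s m" using lm_prop[OF g(2)] g(3) by simp
  have kh: "\<forall>s\<in>Poly_Mapping.keys h. le s m" using lm_prop[OF h(2)] h(3) by simp
  define f where "f = g - h'"
  have fkeys: "\<forall>s\<in>Poly_Mapping.keys f. le s m \<and> s \<noteq> m"
    unfolding f_def h'_def by (rule cancel_keys[OF kg kh hm])
  have fS: "f \<in> ideal_sum A B" unfolding f_def
    using ideal_diff[OF ideal_ideal_sum[OF A B] ideal_sum_left[OF B g(1)] ideal_sum_right[OF A h'B]] .
  show "m \<in> LM (A \<inter> B)"
  proof (cases "f = 0")
    case True
    then have "g \<in> A \<inter> B" using g(1) h'B unfolding f_def by simp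
    then show ?thesis using g unfolding LM_def by blast
  next
    case False
    note lb = lm_below[OF False fkeys]
    obtain a b where ab: "a \<in> A" "b \<in> B" "f = a + b"
      "\<forall>s\<in>Poly_Mapping.keys a. le s (lm f)" "\<forall>s\<in>Poly_Mapping.keys b. le s (lm f)"
      using std_rep[OF A B hyp, of "lm f"] fS lb(2) by blast
    have lfm: "le (lm f) m" "lm f \<noteq> m" using lb(1) unfolding R_def by auto
    have ka: "\<forall>s\<in>Poly_Mapping.keys a. le s m \<and> s \<noteq> m"
    proof
      fix s assume s: "s \<in> Poly_Mapping.keys a"
      then have "le s (lm f)" using ab(4) by blast
      moreover have "s \<noteq> m"
      proof
        assume "s = m"
        then have "le m (lm f)" using \<open>le s (lm f)\<close> by simp
        then show False using lfm le_antisym by blast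
      qed
      ultimately show "le s m \<and> s \<noteq> m" using lfm le_trans by blast
    qed
    define u where "u = g - a"
    have "u \<in> A" unfolding u_def using ideal_diff[OF A g(1) ab(1)] .
    moreover have "u = h' + b" using ab(3) unfolding u_def f_def by (simp add: algebra_simps)
    then have "u \<in> B" using ideal_add[OF B h'B ab(2)] by simp
    moreover have am: "Poly_Mapping.lookup a m = 0" using ka by (auto simp: in_keys_iff)
    have mu: "m \<in> Poly_Mapping.keys u" unfolding u_def using gm am by (simp add: in_keys_iff lookup_minus)
    have "lm u = m"
    proof (rule lm_eqI[OF mu])
      show "\<forall>s\<in>Poly_Mapping.keys u. le s m"
        using keys_add[of g "-a"] kg ka unfolding u_def by (auto simp: in_keys_iff lookup_minus)
    qed
    moreover have "u \<noteq> 0" using mu by auto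
    ultimately show ?thesis unfolding LM_def by blast
  qed
qed

end



context morder begin

lemma inter_imp_gnice:
  fixes A B :: "('v, 'a::field) mpoly set"
  assumes A: "is_ideal A" and B: "is_ideal B"
    and hyp: "LM A \<inter> LM B \<subseteq> LM (A \<inter> B)"
  shows "LM (ideal_sum A B) \<subseteq> LM A \<union> LM B"
proof -
  have main: "\<forall>a\<in>A. \<forall>b\<in>B. (\<forall>s\<in>Poly_Mapping.keys a. le s t) \<longrightarrow> (\<forall>s\<in>Poly_Mapping.keys b. le s t)
      \<longrightarrow> a + b \<noteq> 0 \<longrightarrow> lm (a + b) \<in> LM A \<union> LM B" for t
  proof (induction t rule: wf_induct[OF wf_R])
    case (1 t)
    have below: "lm (a' + b') \<in> LM A \<union> LM B"
      if a': "a' \<in> A" "\<forall>s\<in>Poly_Mapping.keys a'. le s t \<and> s \<noteq> t"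
      and b': "b' \<in> B" "\<forall>s\<in>Poly_Mapping.keys b'. le s t \<and> s \<noteq> t"
      and nz: "a' + b' \<noteq> 0" for a' b'
    proof -
      have "a' \<noteq> 0 \<or> b' \<noteq> 0" using nz by auto
      then have ne: "Poly_Mapping.keys a' \<union> Poly_Mapping.keys b' \<noteq> {}" using keys_empty_iff by blast
      obtain t' where t': "t' \<in> Poly_Mapping.keys a' \<union> Poly_Mapping.keys b'"
        "\<forall>s\<in>Poly_Mapping.keys a' \<union> Poly_Mapping.keys b'. le s t'"
        using ex_max[OF _ ne] by auto
      have "(t', t) \<in> R" using t' a'(2) b'(2) unfolding R_def by blast
      then have IH: "\<forall>a\<in>A. \<forall>b\<in>B. (\<forall>s\<in>Poly_Mapping.keys a. le s t') \<longrightarrow> (\<forall>s\<in>Poly_Mapping.keys b. le s t')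
        \<longrightarrow> a + b \<noteq> 0 \<longrightarrow> lm (a + b) \<in> LM A \<union> LM B" using 1 by blast
      have ka: "\<And>s. s\<in>Poly_Mapping.keys a' \<Longrightarrow> le s t'" and kb: "\<And>s. s\<in>Poly_Mapping.keys b' \<Longrightarrow> le s t'"
        using t'(2) by auto
      show ?thesis using IH[rule_format, OF a'(1) b'(1) ka kb nz] .
    qed
    show ?case
    proof (intro ballI impI)
      fix a b assume a: "a \<in> A" and b: "b \<in> B" and ka: "\<forall>s\<in>Poly_Mapping.keys a. le s t"
        and kb: "\<forall>s\<in>Poly_Mapping.keys b. le s t" and nz: "a + b \<noteq> 0"
      show "lm (a + b) \<in> LM A \<union> LM B"
      proof (cases "t \<in> Poly_Mapping.keys (a + b)")
        case True
        have kab: "\<forall>s\<in>Poly_Mapping.keys (a + b). le s t" using keys_add[of a b] ka kb by blast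
        have lab: "lm (a + b) = t" using lm_eqI[OF True kab] .
        have "Poly_Mapping.lookup a t \<noteq> 0 \<or> Poly_Mapping.lookup b t \<noteq> 0"
          using True by (auto simp: in_keys_iff lookup_add)
        then show ?thesis
        proof
          assume at: "Poly_Mapping.lookup a t \<noteq> 0"
          then have "t \<in> Poly_Mapping.keys a" by (simp add: in_keys_iff)
          then have "lm a = t" "a \<noteq> 0" using lm_eqI ka by auto
          then have "t \<in> LM A" using a unfolding LM_def by blast
          then show ?thesis using lab by simp
        next
          assume bt: "Poly_Mapping.lookup b t \<noteq> 0"
          then have "t \<in> Poly_Mapping.keys b" by (simp add: in_keys_iff)
          then have "lm b = t" "b \<noteq> 0" using lm_eqI kb by auto
          then have "t \<in> LM B" using b unfolding LM_def by blast
          then show ?thesis using lab by simp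
        qed
      next
        case False
        then have sum0: "Poly_Mapping.lookup a t + Poly_Mapping.lookup b t = 0"
          by (simp add: in_keys_iff lookup_add)
        show ?thesis
        proof (cases "Poly_Mapping.lookup a t = 0")
          case True
          then have "Poly_Mapping.lookup b t = 0" using sum0 by simp
          then have "\<forall>s\<in>Poly_Mapping.keys a. le s t \<and> s \<noteq> t" "\<forall>s\<in>Poly_Mapping.keys b. le s t \<and> s \<noteq> t"
            using ka kb True by (auto simp: in_keys_iff)
          then show ?thesis using below[OF a _ b _ nz] by blast
        next
          case False
          then have bt: "Poly_Mapping.lookup b t \<noteq> 0" using sum0 by auto
          have la: "lm a = t" using lm_eqI[of t a] False ka by (simp add: in_keys_iff)
          have lb: "lm b = t" using lm_eqI[of t b] bt kb by (simp add: in_keys_iff)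
          have nza: "a \<noteq> 0" and nzb: "b \<noteq> 0" using False bt by auto
          have "t \<in> LM A" unfolding LM_def using a nza la by (intro CollectI exI[of _ a]) simp
          moreover have "t \<in> LM B" unfolding LM_def using b nzb lb by (intro CollectI exI[of _ b]) simp
          ultimately have "t \<in> LM A \<inter> LM B" by blast
          then have "t \<in> LM (A \<inter> B)" using hyp by blast
          then obtain u where u: "u \<in> A \<inter> B" "u \<noteq> 0" "lm u = t" unfolding LM_def by blast
          have ku: "\<forall>s\<in>Poly_Mapping.keys u. le s t" using lm_prop[OF u(2)] u(3) by simp
          have ut: "Poly_Mapping.lookup u t \<noteq> 0" using lookup_lm_nz[OF u(2)] u(3) by simp
          define ca where "ca = Poly_Mapping.lookup a t / Poly_Mapping.lookup u t"
          define cb where "cb = Poly_Mapping.lookup b t / Poly_Mapping.lookup u t"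
          define a' where "a' = a - Poly_Mapping.single 0 ca * u"
          define b' where "b' = b - Poly_Mapping.single 0 cb * u"
          have ka': "\<forall>s\<in>Poly_Mapping.keys a'. le s t \<and> s \<noteq> t"
            unfolding a'_def ca_def by (rule cancel_keys[OF ka ku ut])
          have kb': "\<forall>s\<in>Poly_Mapping.keys b'. le s t \<and> s \<noteq> t"
            unfolding b'_def cb_def by (rule cancel_keys[OF kb ku ut])
          have "ca + cb = 0" unfolding ca_def cb_def using sum0 by (simp add: add_divide_distrib[symmetric])
          then have "Poly_Mapping.single 0 ca * u + Poly_Mapping.single 0 cb * u = 0"
            by (simp add: single_add[symmetric] distrib_right[symmetric])
          then have "a' + b' = a + b" unfolding a'_def b'_def by (simp add: algebra_simps)
          moreover have "a' \<in> A" unfolding a'_def using ideal_diff[OF A a ideal_mult[OF A]] u(1) by blast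
          moreover have "b' \<in> B" unfolding b'_def using ideal_diff[OF B b ideal_mult[OF B]] u(1) by blast
          ultimately show ?thesis using below[OF _ ka' _ kb'] nz by simp
        qed
      qed
    qed
  qed
  show ?thesis
  proof
    fix m assume "m \<in> LM (ideal_sum A B)"
    then obtain f where f: "f \<in> ideal_sum A B" "f \<noteq> 0" "lm f = m" unfolding LM_def by blast
    then obtain a b where ab: "a \<in> A" "b \<in> B" "f = a + b" unfolding ideal_sum_def by blast
    have "a \<noteq> 0 \<or> b \<noteq> 0" using f(2) ab(3) by auto
    then have ne: "Poly_Mapping.keys a \<union> Poly_Mapping.keys b \<noteq> {}" using keys_empty_iff by blast
    obtain t where t: "\<forall>s\<in>Poly_Mapping.keys a \<union> Poly_Mapping.keys b. le s t"
      using ex_max[OF _ ne] by auto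
    have ka: "\<And>s. s\<in>Poly_Mapping.keys a \<Longrightarrow> le s t" and kb: "\<And>s. s\<in>Poly_Mapping.keys b \<Longrightarrow> le s t"
      using t by auto
    have nz: "a + b \<noteq> 0" using f(2) ab(3) by simp
    show "m \<in> LM A \<union> LM B" using main[of t, rule_format, OF ab(1) ab(2) ka kb nz] f(3) ab(3) by simp
  qed
qed

end

theorem mainTheorem5:
  fixes le :: "('v::finite \<Rightarrow>\<^sub>0 nat) \<Rightarrow> ('v \<Rightarrow>\<^sub>0 nat) \<Rightarrow> bool"
    and J E E' :: "('v, 'a::field) mpoly set"
  assumes "monomial_order le"
    and "is_ideal J" and "is_ideal E" and "is_ideal E'"
    and "g_nice le J E" and "g_nice le J E'"
  shows "(ideal_sum (J \<inter> E) (J \<inter> E') = J \<inter> ideal_sum E E' \<and> g_nice le J (ideal_sum E E'))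
     \<longleftrightarrow> init_ideal le (ideal_sum (J \<inter> E) (J \<inter> E')) = init_ideal le J \<inter> init_ideal le (ideal_sum E E')"
proof -
  interpret morder le by (rule morder.intro) (rule assms(1))
  note J = assms(2) and E = assms(3) and E' = assms(4)
  define F where "F = ideal_sum E E'"
  define P where "P = ideal_sum (J \<inter> E) (J \<inter> E')"
  define Q where "Q = J \<inter> F"
  have F: "is_ideal F" unfolding F_def using ideal_ideal_sum[OF E E'] .
  have JF: "is_ideal (ideal_sum J F)" using ideal_ideal_sum[OF J F] .
  have P: "is_ideal P" unfolding P_def using ideal_ideal_sum[OF ideal_inter[OF J E] ideal_inter[OF J E']] .
  have Q: "is_ideal Q" unfolding Q_def using ideal_inter[OF J F] .
  have PQ: "P \<subseteq> Q" unfolding P_def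
  proof (rule ideal_sum_least[OF Q])
    show "J \<inter> E \<subseteq> Q" unfolding Q_def F_def using ideal_sum_left[OF E'] by blast
    show "J \<inter> E' \<subseteq> Q" unfolding Q_def F_def using ideal_sum_right[OF E] by blast
  qed
  have gn: "g_nice le J F \<longleftrightarrow> LM (ideal_sum J F) = LM J \<union> LM F"
    unfolding g_nice_def init_Setp[OF JF] init_Setp[OF J] init_Setp[OF F] Setp_sum
    using Setp_inj[where 'a='a] by auto
  have bi: "init_ideal le P = init_ideal le J \<inter> init_ideal le F \<longleftrightarrow> LM P = LM J \<inter> LM F"
    unfolding init_Setp[OF P] init_Setp[OF J] init_Setp[OF F] Setp_inter
    using Setp_inj[where 'a='a] by auto
  have "(P = Q \<and> g_nice le J F) \<longleftrightarrow> LM P = LM J \<inter> LM F"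
  proof
    assume a: "P = Q \<and> g_nice le J F"
    then have "LM (ideal_sum J F) \<subseteq> LM J \<union> LM F" using gn by blast
    then have "LM J \<inter> LM F \<subseteq> LM Q" unfolding Q_def using gnice_imp_inter[OF J F] by blast
    moreover have "LM Q \<subseteq> LM J \<inter> LM F" unfolding Q_def by (rule LM_inter_sub)
    ultimately show "LM P = LM J \<inter> LM F" using a by blast
  next
    assume b: "LM P = LM J \<inter> LM F"
    have LQ: "LM Q \<subseteq> LM J \<inter> LM F" unfolding Q_def by (rule LM_inter_sub)
    have "LM Q \<subseteq> LM P" using LQ b by blast
    then have "Q \<subseteq> P" using LM_eq_sub[OF P Q PQ] by blast
    then have "P = Q" using PQ by blast
    moreover have "LM J \<inter> LM F \<subseteq> LM (J \<inter> F)" using b LM_mono[OF PQ] unfolding Q_def by blast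
    then have "LM (ideal_sum J F) \<subseteq> LM J \<union> LM F" using inter_imp_gnice[OF J F] by blast
    then have "g_nice le J F" using gn LM_sum_sup[OF J F] by blast
    ultimately show "P = Q \<and> g_nice le J F" by blast
  qed
  then show ?thesis unfolding P_def Q_def F_def[symmetric] using bi unfolding P_def by blast
qed



end
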